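(* Let $\mathfrak P$ be a prime ideal of $\mathcal O$ over $\mathfrak p$, $f_\mathfrak P\in\hat A_\mathfrak p[x]$ the corresponding monic irreducible factor of $f$, $n_\mathfrak P=\deg f_\mathfrak P$, and $\theta_\mathfrak P$ a root of $f_\mathfrak P$ in an algebraic closure $\overline{K}_\mathfrak p$. Let $0\le i<j<n_\mathfrak P$ and let $g_i,g_j\in\hat A_\mathfrak p[x]$ be divisor polynomials of $f_\mathfrak P$ of degrees $i$ and $j$ respectively. Then $$\hat v(g_j(\theta_\mathfrak P))\ \ge\ \hat v(g_i(\theta_\mathfrak P)).$$
   Context: Let $A$ be a Dedekind domain with fraction field $K$, $\mathfrak p$ a nonzero prime ideal of $A$ with discrete valuation $v_\mathfrak p$, $K_\mathfrak p$ the completion of $K$ at $\mathfrak p$, $\hat A_\mathfrak p$ its valuation ring, and $\hat v$ the unique extension of $v_\mathfrak p$ to an algebraic closure $\overline K_\mathfrak p$. Let $f\in A[x]$ be monic, irreducible and separable, $\theta$ a root of $f$, $L=K(\theta)$ and $\mathcal O$ the integral closure of $A$ in $L$. The prime ideals $\mathfrak P$ of $\mathcal O$ over $\mathfrak p$ correspond bijectively to the monic irreducible factors $f_\mathfrak P$ of $f$ in $\hat A_\mathfrak p[x]$. For $g=\sum c_kx^k\in K_\mathfrak p[x]$ put $v_0(g)=\min_k v_\mathfrak p(c_k)$. For $0\le m<n_\mathfrak P$, a divisor polynomial of degree $m$ of $f_\mathfrak P$ is a monic $g_m\in\hat A_\mathfrak p[x]$ of degree $m$ such that $\hat v(g_m(\theta_\mathfrak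 P))\ge \hat v(g(\theta_\mathfrak P))-v_0(g)$ for every $g\in\hat A_\mathfrak p[x]$ of degree $m$ (this condition does not depend on the choice of the root $\theta_\mathfrak P$). *)

theory Defs
  imports "HOL-Computational_Algebra.Polynomial" "HOL-Library.Extended_Real"
begin

definition valuation :: "('a::field \<Rightarrow> ereal) \<Rightarrow> bool" where
  "valuation w \<longleftrightarrow>
     (\<forall>x. w x = \<infinity> \<longleftrightarrow> x = 0) \<and> (\<forall>x. w x \<noteq> -\<infinity>) \<and>
     (\<forall>x y. w (x * y) = w x + w y) \<and>
     (\<forall>x y. min (w x) (w y) \<le> w (x + y))"

definition discrete_valuation :: "('a::field \<Rightarrow> ereal) \<Rightarrow> bool" where
  "discrete_valuation v \<longleftrightarrow> valuation v \<and>
     v ` (UNIV - {0}) = range (\<lambda>k::int. ereal (of_int k))"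

definition complete_wrt :: "('a::field \<Rightarrow> ereal) \<Rightarrow> bool" where
  "complete_wrt v \<longleftrightarrow>
     (\<forall>x::nat \<Rightarrow> 'a.
        (\<forall>N::int. \<exists>M. \<forall>m\<ge>M. \<forall>n\<ge>M. ereal (of_int N) \<le> v (x m - x n)) \<longrightarrow>
        (\<exists>l. \<forall>N::int. \<exists>M. \<forall>n\<ge>M. ereal (of_int N) \<le> v (x n - l)))"

definition val_ring :: "('a::field \<Rightarrow> ereal) \<Rightarrow> 'a set" where
  "val_ring v = {a. 0 \<le> v a}"

definition poly_over :: "'a set \<Rightarrow> 'a::zero poly \<Rightarrow> bool" where
  "poly_over R g \<longleftrightarrow> (\<forall>k. coeff g k \<in> R)"

definition irreducible_over :: "'a::comm_ring_1 set \<Rightarrow> 'a poly \<Rightarrow> bool" where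
  "irreducible_over R p \<longleftrightarrow> poly_over R p \<and> p \<noteq> 0 \<and>
     \<not> (\<exists>u. poly_over R u \<and> p * u = 1) \<and>
     (\<forall>a b. poly_over R a \<and> poly_over R b \<and> p = a * b \<longrightarrow>
        (\<exists>u. poly_over R u \<and> a * u = 1) \<or> (\<exists>u. poly_over R u \<and> b * u = 1))"

definition v0 :: "('a::field \<Rightarrow> ereal) \<Rightarrow> 'a poly \<Rightarrow> ereal" where
  "v0 v g = Min ((\<lambda>k. v (coeff g k)) ` {..degree g})"

definition field_embedding :: "('a::field \<Rightarrow> 'b::field) \<Rightarrow> bool" where
  "field_embedding \<iota> \<longleftrightarrow> inj \<iota> \<and> \<iota> 0 = 0 \<and> \<iota> 1 = 1 \<and>
     (\<forall>x y. \<iota> (x + y) = \<iota> x + \<iota> y) \<and> (\<forall>x y. \<iota> (x * y) = \<iota> x * \<iota> y)"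

definition is_algebraic_closure :: "('a::field \<Rightarrow> 'b::field) \<Rightarrow> bool" where
  "is_algebraic_closure \<iota> \<longleftrightarrow> field_embedding \<iota> \<and>
     (\<forall>p::'b poly. 0 < degree p \<longrightarrow> (\<exists>z. poly p z = 0)) \<and>
     (\<forall>z::'b. \<exists>q::'a poly. q \<noteq> 0 \<and> poly (map_poly \<iota> q) z = 0)"

definition divisor_polynomial ::
  "('a::field \<Rightarrow> ereal) \<Rightarrow> ('b::field \<Rightarrow> ereal) \<Rightarrow> ('a \<Rightarrow> 'b) \<Rightarrow> 'a poly \<Rightarrow> 'b
     \<Rightarrow> nat \<Rightarrow> 'a poly \<Rightarrow> bool" where
  "divisor_polynomial v vhat \<iota> fP \<theta> m g \<longleftrightarrow>
     m < degree fP \<and> poly_over (val_ring v) g \<and> lead_coeff g = 1 \<and> degree g = m \<and>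
     (\<forall>h. poly_over (val_ring v) h \<and> h \<noteq> 0 \<and> degree h = m \<longrightarrow>
        vhat (poly (map_poly \<iota> h) \<theta>) - v0 v h \<le> vhat (poly (map_poly \<iota> g) \<theta>))"

end

theory Submission
  imports Defs
begin

lemma val_one: assumes "valuation w" shows "w 1 = 0"
proof -
  have a: "w 1 = w 1 + w 1" using assms unfolding valuation_def by (metis mult_1)
  have "w 1 \<noteq> \<infinity>" "w 1 \<noteq> -\<infinity>" using assms unfolding valuation_def by auto
  then obtain r where "w 1 = ereal r" by (cases "w 1") auto
  with a show ?thesis by (simp add: zero_ereal_def)
qed

lemma val_m1: assumes "valuation w" shows "w (-1) = 0"
proof -
  have a: "w 1 = w (-1) + w (-1)" using assms unfolding valuation_def by (metis mult_minus1 minus_minus)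
  have "w (-1) \<noteq> \<infinity>" "w (-1) \<noteq> -\<infinity>" using assms unfolding valuation_def by auto
  then obtain r where "w (-1) = ereal r" by (cases "w (-1)") auto
  with a val_one[OF assms] show ?thesis by (simp add: zero_ereal_def)
qed

lemma val_sum_ge:
  assumes "valuation w" "finite A" "\<And>k. k \<in> A \<Longrightarrow> B \<le> w (f k)"
  shows "B \<le> w (sum f A)"
  using assms(2,3)
proof (induction A rule: finite_induct)
  case empty
  have "w 0 = \<infinity>" using assms(1) unfolding valuation_def by blast
  then show ?case by simp
next
  case (insert x F)
  have "min (w (f x)) (w (sum f F)) \<le> w (f x + sum f F)"
    using assms(1) unfolding valuation_def by blast
  moreover have "B \<le> min (w (f x)) (w (sum f F))" using insert by auto
  ultimately have "B \<le> w (f x + sum f F)" by (metis order_trans)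
  then show ?case using insert by simp
qed

lemma val_pow_ge0:
  assumes "valuation w" "0 \<le> w x" shows "0 \<le> w (x ^ m)"
proof (induction m)
  case 0 then show ?case using val_one[OF assms(1)] by simp
next
  case (Suc m)
  have "w (x ^ Suc m) = w x + w (x ^ m)" using assms(1) unfolding valuation_def by simp
  then show ?case using Suc assms(2) by simp
qed

lemma val_pow_real:
  assumes "valuation w" "w x = ereal t" shows "w (x ^ m) = ereal (real m * t)"
proof (induction m)
  case 0 then show ?case using val_one[OF assms(1)] by (simp add: zero_ereal_def)
next
  case (Suc m)
  have "w (x ^ Suc m) = w x + w (x ^ m)" using assms(1) unfolding valuation_def by simp
  then show ?case using Suc assms(2) by (simp add: algebra_simps)
qed

lemma integral_root:
  assumes w: "valuation w" and vv: "\<forall>a. w (\<iota> a) = v a" and emb: "field_embedding \<iota>"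
    and mon: "lead_coeff f = 1" and po: "poly_over (val_ring v) f" and d: "0 < degree f"
    and root: "poly (map_poly \<iota> f) x = 0"
  shows "0 \<le> w x"
proof (rule ccontr)
  assume neg: "\<not> 0 \<le> w x"
  have "w x \<noteq> \<infinity>" using neg by auto
  moreover have "w x \<noteq> -\<infinity>" using w unfolding valuation_def by auto
  ultimately obtain t where t: "w x = ereal t" by (cases "w x") auto
  with neg have tneg: "t < 0" by (simp add: zero_ereal_def)
  define n where "n = degree f"
  have i0: "\<iota> 0 = 0" and inj: "inj \<iota>" using emb unfolding field_embedding_def by auto
  have nz: "\<And>y. y \<noteq> 0 \<Longrightarrow> \<iota> y \<noteq> 0" using i0 inj by (metis injD)
  have dm: "degree (map_poly \<iota> f) = n" unfolding n_def by (rule degree_map_poly[OF nz])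
  have i1: "\<iota> 1 = 1" using emb unfolding field_embedding_def by auto
  have "poly (map_poly \<iota> f) x = (\<Sum>k\<le>n. \<iota> (coeff f k) * x ^ k)"
    by (simp add: poly_altdef dm coeff_map_poly[of \<iota>, OF i0])
  also have "\<dots> = (\<Sum>k<n. \<iota> (coeff f k) * x ^ k) + x ^ n"
    using mon i1 unfolding n_def by (simp add: lessThan_Suc_atMost[symmetric])
  finally have eq: "x ^ n = - (\<Sum>k<n. \<iota> (coeff f k) * x ^ k)" using root
    by (simp add: eq_neg_iff_add_eq_0 add.commute)
  have "ereal (real (n - 1) * t) \<le> w (\<Sum>k<n. \<iota> (coeff f k) * x ^ k)"
  proof (rule val_sum_ge[OF w])
    fix k assume k: "k \<in> {..<n}"
    have c: "0 \<le> v (coeff f k)" using po unfolding poly_over_def val_ring_def by auto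
    have "w (\<iota> (coeff f k) * x ^ k) = v (coeff f k) + ereal (real k * t)"
      using w vv val_pow_real[OF w t] unfolding valuation_def by simp
    moreover have "real (n - 1) * t \<le> real k * t"
      using k tneg by (intro mult_right_mono_neg) auto
    ultimately show "ereal (real (n - 1) * t) \<le> w (\<iota> (coeff f k) * x ^ k)"
      using c by (metis add_mono ereal_less_eq(3) add_0)
  qed auto
  moreover have "w (x ^ n) = w (\<Sum>k<n. \<iota> (coeff f k) * x ^ k)"
    using eq w val_m1[OF w] unfolding valuation_def by (metis mult_minus1 add_0)
  ultimately have "ereal (real (n - 1) * t) \<le> ereal (real n * t)" using val_pow_real[OF w t] by simp
  hence "real (n - 1) * t \<le> real n * t" by simp
  moreover have "real (n - 1) = real n - 1" using d unfolding n_def by simp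
  ultimately show False using tneg by (simp add: algebra_simps)
qed

theorem mainTheorem1:
  fixes v :: "'k::field \<Rightarrow> ereal" and vhat :: "'l::field \<Rightarrow> ereal"
    and \<iota> :: "'k \<Rightarrow> 'l" and fP gi gj :: "'k poly" and \<theta> :: 'l and i j :: nat
  assumes "discrete_valuation v" and "complete_wrt v"
    and "is_algebraic_closure \<iota>"
    and "valuation vhat" and "\<forall>a. vhat (\<iota> a) = v a"
    and "lead_coeff fP = 1" and "irreducible_over (val_ring v) fP"
    and "poly (map_poly \<iota> fP) \<theta> = 0"
    and "i < j" and "j < degree fP"
    and "divisor_polynomial v vhat \<iota> fP \<theta> i gi"
    and "divisor_polynomial v vhat \<iota> fP \<theta> j gj"
  shows "vhat (poly (map_poly \<iota> gi) \<theta>) \<le> vhat (poly (map_poly \<iota> gj) \<theta>)"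
proof -
  have w: "valuation vhat" by fact
  have vval: "valuation v" using assms(1) unfolding discrete_valuation_def by simp
  have emb: "field_embedding \<iota>" using assms(3) unfolding is_algebraic_closure_def by simp
  have i0: "\<iota> 0 = 0" and i1: "\<iota> 1 = 1" using emb unfolding field_embedding_def by auto
  have th: "0 \<le> vhat \<theta>"
    by (rule integral_root[OF w assms(5) emb assms(6) _ _ assms(8)])
      (use assms(7,9,10) in \<open>auto simp: irreducible_over_def\<close>)
  define m where "m = j - i"
  define h where "h = monom 1 m * gi"
  have gi: "poly_over (val_ring v) gi" "lead_coeff gi = 1" "degree gi = i"
    using assms(11) unfolding divisor_polynomial_def by auto
  have gi0: "gi \<noteq> 0" using gi by auto
  have hdeg: "degree h = j" unfolding h_def m_def using gi gi0 assms(9)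
    by (simp add: degree_mult_eq degree_monom_eq)
  have hcoeff: "coeff h k = (if k < m then 0 else coeff gi (k - m))" for k
    unfolding h_def by (simp add: coeff_monom_mult)
  have v0v: "v 0 = \<infinity>" using vval unfolding valuation_def by simp
  have hpo: "poly_over (val_ring v) h"
    using gi(1) v0v unfolding poly_over_def val_ring_def hcoeff by auto
  have hlead: "coeff h j = 1" using hcoeff[of j] gi hdeg unfolding m_def using assms(9) by simp
  have h0: "h \<noteq> 0" using hlead by auto
  have v1: "v 1 = 0" by (rule val_one[OF vval])
  have v0h: "v0 v h = 0" unfolding v0_def hdeg
  proof (rule Min_eqI)
    show "finite ((\<lambda>k. v (coeff h k)) ` {..j})" by simp
    show "\<And>y. y \<in> (\<lambda>k. v (coeff h k)) ` {..j} \<Longrightarrow> 0 \<le> y"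
      using hpo unfolding poly_over_def val_ring_def by auto
    show "0 \<in> (\<lambda>k. v (coeff h k)) ` {..j}" using hlead v1 by force
  qed
  have maph: "map_poly \<iota> h = monom 1 m * map_poly \<iota> gi"
    by (rule poly_eqI) (simp add: coeff_map_poly[of \<iota>, OF i0] hcoeff coeff_monom_mult i0)
  have evh: "poly (map_poly \<iota> h) \<theta> = \<theta> ^ m * poly (map_poly \<iota> gi) \<theta>"
    by (simp add: maph poly_monom)
  have "vhat (poly (map_poly \<iota> h) \<theta>) - v0 v h \<le> vhat (poly (map_poly \<iota> gj) \<theta>)"
    using assms(12) hpo h0 hdeg unfolding divisor_polynomial_def by blast
  hence le: "vhat (\<theta> ^ m) + vhat (poly (map_poly \<iota> gi) \<theta>) \<le> vhat (poly (map_poly \<iota> gj) \<theta>)"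
    using w v0h evh unfolding valuation_def by simp
  have "0 \<le> vhat (\<theta> ^ m)" by (rule val_pow_ge0[OF w th])
  hence "vhat (poly (map_poly \<iota> gi) \<theta>) \<le> vhat (\<theta> ^ m) + vhat (poly (map_poly \<iota> gi) \<theta>)"
    by (simp add: add_increasing)
  with le show ?thesis by (rule order_trans[rotated])
qed

end
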